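(* Let $X,Y\subseteq\mathbb{Q}$ be such that $X\setminus Y$ and $Y\setminus X$ are finite. Then $X$ is a base if and only if $Y$ is a base.
   Context: For $X\subseteq\mathbb{Q}$ and a positive integer $N$, write $X_N:=\{x_1+\cdots+x_N : x_1,\dots,x_N\in X\}$. $X$ is called a base if $X_N=\mathbb{Q}$ for some $N\ge 1$. *)

theory Defs
  imports Complex_Main
begin

definition sumset :: "nat \<Rightarrow> rat set \<Rightarrow> rat set" where
  "sumset N X = {(\<Sum>i<N. x i) | x. \<forall>i<N. x i \<in> X}"

definition is_base :: "rat set \<Rightarrow> bool" where
  "is_base X \<longleftrightarrow> (\<exists>N\<ge>1. sumset N X = UNIV)"

end

theory Submission
  imports Defs
begin

fun S :: "nat \<Rightarrow> rat set \<Rightarrow> rat set" where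
  "S 0 Z = {0}"
| "S (Suc n) Z = {x + s | x s. x \<in> Z \<and> s \<in> S n Z}"

lemma sumset_S: "sumset n Z = S n Z"
proof (induction n)
  case 0
  then show ?case by (simp add: sumset_def)
next
  case (Suc n)
  show ?case
  proof
    show "sumset (Suc n) Z \<subseteq> S (Suc n) Z"
    proof
      fix q assume "q \<in> sumset (Suc n) Z"
      then obtain x where x: "\<forall>i<Suc n. x i \<in> Z" "q = (\<Sum>i<Suc n. x i)"
        unfolding sumset_def by blast
      have "(\<Sum>i<n. x i) \<in> sumset n Z" unfolding sumset_def using x(1) by auto
      then have "(\<Sum>i<n. x i) \<in> S n Z" using Suc by simp
      moreover have "q = x n + (\<Sum>i<n. x i)" using x(2) by simp
      ultimately show "q \<in> S (Suc n) Z" using x(1) by auto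
    qed
  next
    show "S (Suc n) Z \<subseteq> sumset (Suc n) Z"
    proof
      fix q assume "q \<in> S (Suc n) Z"
      then obtain y s where ys: "y \<in> Z" "s \<in> S n Z" "q = y + s" by auto
      then have "s \<in> sumset n Z" using Suc by simp
      then obtain f where f: "\<forall>i<n. f i \<in> Z" "s = (\<Sum>i<n. f i)"
        unfolding sumset_def by blast
      define g where "g = f(n := y)"
      have "(\<Sum>i<n. g i) = (\<Sum>i<n. f i)" unfolding g_def by (rule sum.cong) auto
      then have "q = (\<Sum>i<Suc n. g i)" using ys f by (simp add: g_def)
      moreover have "\<forall>i<Suc n. g i \<in> Z" using f ys by (auto simp: g_def less_Suc_eq)
      ultimately show "q \<in> sumset (Suc n) Z" unfolding sumset_def by blast
    qed
  qed
qed

lemma S_add: "r \<in> S m Z \<Longrightarrow> s \<in> S n Z \<Longrightarrow> r + s \<in> S (m + n) Z"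
proof (induction m arbitrary: r)
  case 0
  then show ?case by simp
next
  case (Suc m)
  then obtain x t where "x \<in> Z" "t \<in> S m Z" "r = x + t" by auto
  then have "t + s \<in> S (m + n) Z" using Suc by blast
  then show ?case using \<open>x \<in> Z\<close> \<open>r = x + t\<close> by (auto simp: add.assoc)
qed

lemma S_copies: "r \<in> S t Z \<Longrightarrow> of_nat c * r \<in> S (c * t) Z"
proof (induction c)
  case 0
  then show ?case by simp
next
  case (Suc c)
  have "r + of_nat c * r \<in> S (t + c * t) Z" using S_add Suc by blast
  then show ?case by (simp add: algebra_simps)
qed

lemma S_mono: "Z \<subseteq> W \<Longrightarrow> S n Z \<subseteq> S n W"
  by (induction n) auto

lemma S_one: "y \<in> Z \<Longrightarrow> y \<in> S 1 Z"
  by auto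

lemma S_insert: "q \<in> S n (insert a Z) \<Longrightarrow> \<exists>j\<le>n. q - of_nat j * a \<in> S (n - j) Z"
proof (induction n arbitrary: q)
  case 0
  then show ?case by simp
next
  case (Suc n)
  then obtain x s where xs: "x \<in> insert a Z" "s \<in> S n (insert a Z)" "q = x + s" by auto
  then obtain j where j: "j \<le> n" "s - of_nat j * a \<in> S (n - j) Z" using Suc.IH by blast
  show ?case
  proof (cases "x = a")
    case True
    have "q - of_nat (Suc j) * a = s - of_nat j * a" using xs True by (simp add: algebra_simps)
    then show ?thesis using j by (intro exI[of _ "Suc j"]) auto
  next
    case False
    then have "x \<in> Z" using xs by auto
    have eq1: "q - of_nat j * a = x + (s - of_nat j * a)" using xs by simp
    have eq2: "Suc n - j = Suc (n - j)" using j by simp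
    have "x + (s - of_nat j * a) \<in> S (Suc (n - j)) Z"
      using \<open>x \<in> Z\<close> j(2) by (simp only: S.simps) blast
    then have "q - of_nat j * a \<in> S (Suc n - j) Z" unfolding eq1 eq2 .
    then show ?thesis using j by (intro exI[of _ j]) auto
  qed
qed

lemma S_lower: "\<forall>x\<in>Z. l \<le> x \<Longrightarrow> s \<in> S n Z \<Longrightarrow> of_nat n * l \<le> s"
proof (induction n arbitrary: s)
  case 0 then show ?case by simp
next
  case (Suc n)
  then obtain x t where "x \<in> Z" "t \<in> S n Z" "s = x + t" by auto
  with Suc show ?case by (fastforce simp: algebra_simps)
qed

lemma S_upper: "\<forall>x\<in>Z. x \<le> l \<Longrightarrow> s \<in> S n Z \<Longrightarrow> s \<le> of_nat n * l"
proof (induction n arbitrary: s)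
  case 0 then show ?case by simp
next
  case (Suc n)
  then obtain x t where "x \<in> Z" "t \<in> S n Z" "s = x + t" by auto
  with Suc show ?case by (fastforce simp: algebra_simps)
qed

lemma rat_pos_frac: "(r::rat) > 0 \<Longrightarrow> \<exists>u v::nat. v > 0 \<and> r = of_nat u / of_nat v"
proof -
  assume r: "r > 0"
  obtain p q where pq: "quotient_of r = (p, q)" by (cases "quotient_of r") auto
  have rq: "r = of_int p / of_int q" using pq quotient_of_div by blast
  have q: "q > 0" using pq quotient_of_denom_pos by blast
  have "p > 0"
  proof (rule ccontr)
    assume "\<not> p > 0"
    then have "of_int p / of_int q \<le> (0::rat)" using q by (simp add: divide_nonpos_pos)
    then show False using r rq by simp
  qed
  then have "r = of_nat (nat p) / of_nat (nat q)" using rq q by simp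
  then show ?thesis using q by (intro exI[of _ "nat p"] exI[of _ "nat q"]) auto
qed

lemma S_pad:
  assumes "0 \<in> S B Z" "0 \<in> S (Suc B) Z" "n \<ge> B * B"
  shows "0 \<in> S n Z"
proof (cases "B = 0")
  case True
  then have "of_nat n * 0 \<in> S (n * 1) Z" using assms(2) S_copies by (metis One_nat_def)
  then show ?thesis by simp
next
  case False
  define d where "d = n div B"
  define r where "r = n mod B"
  have "r < B" using False r_def by simp
  have "(B * B) div B \<le> n div B" by (rule div_le_mono[OF assms(3)])
  then have "B \<le> d" unfolding d_def using False by simp
  have rd: "r \<le> d" using \<open>r < B\<close> \<open>B \<le> d\<close> by simp
  have "(d - r) * B + r * Suc B = ((d - r) + r) * B + r" by (simp add: algebra_simps)
  also have "(d - r) + r = d" using rd by simp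
  also have "d * B + r = n" unfolding d_def r_def by simp
  finally have n: "n = (d - r) * B + r * Suc B" by simp
  have "of_nat (d - r) * 0 \<in> S ((d - r) * B) Z" using assms(1) S_copies by blast
  moreover have "of_nat r * 0 \<in> S (r * Suc B) Z" using assms(2) S_copies by blast
  ultimately have "0 + 0 \<in> S ((d - r) * B + r * Suc B) Z" using S_add by fastforce
  then show ?thesis using n by simp
qed

lemma base_remove:
  assumes SN: "S N (insert a Y) = UNIV" and N: "N \<ge> 1"
  shows "\<exists>M\<ge>1. S M Y = UNIV"
proof -
  have "\<exists>c\<in>Y. c < 0"
  proof (rule ccontr)
    assume "\<not> ?thesis"
    hence "\<forall>x\<in>insert a Y. min a 0 \<le> x" by auto
    moreover have "of_nat N * min a 0 - 1 \<in> S N (insert a Y)" using SN by simp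
    ultimately have "of_nat N * min a 0 \<le> of_nat N * min a 0 - 1" by (rule S_lower)
    then show False by simp
  qed
  then obtain c where c: "c \<in> Y" "c < 0" by blast
  have "\<exists>b\<in>Y. b > 0"
  proof (rule ccontr)
    assume "\<not> ?thesis"
    hence "\<forall>x\<in>insert a Y. x \<le> max a 0" by auto
    moreover have "of_nat N * max a 0 + 1 \<in> S N (insert a Y)" using SN by simp
    ultimately have "of_nat N * max a 0 + 1 \<le> of_nat N * max a 0" by (rule S_upper)
    then show False by simp
  qed
  then obtain b where b: "b \<in> Y" "b > 0" by blast
  define R where "R = {r. \<exists>n. r \<in> S n Y}"
  have R0: "0 \<in> R" unfolding R_def by (auto intro: exI[of _ 0])
  have Radd: "r + s \<in> R" if "r \<in> R" "s \<in> R" for r s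
    using that S_add unfolding R_def by blast
  have RY: "y \<in> R" if "y \<in> Y" for y
    using that S_one unfolding R_def by blast
  have Rmult: "of_nat k * r \<in> R" if "r \<in> R" for r k
    using that S_copies unfolding R_def by blast
  have negY: "- y \<in> R" if y: "y \<in> Y" for y
  proof -
    have key: "- y \<in> R" if ky: "y \<in> Y" "e \<in> Y" "y / (- e) > 0" for y e
    proof -
      have e: "e \<noteq> 0" using ky(3) by auto
      obtain u v :: nat where uv: "v > 0" "y / (- e) = of_nat u / of_nat v"
        using rat_pos_frac[OF ky(3)] by blast
      then have "of_nat v * y = of_nat u * (- e)" using e
        by (simp add: field_simps)
      moreover have "of_nat v * y = y + of_nat (v - 1) * y" using uv(1)
        by (cases v) (auto simp: algebra_simps)
      ultimately have "- y = of_nat (v - 1) * y + of_nat u * e" by (simp add: algebra_simps)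
      moreover have "of_nat (v - 1) * y + of_nat u * e \<in> R"
        using Radd[OF Rmult[OF RY[OF ky(1)]] Rmult[OF RY[OF ky(2)]]] .
      ultimately show ?thesis by simp
    qed
    consider "y > 0" | "y = 0" | "y < 0" by linarith
    then show ?thesis
    proof cases
      case 1 then show ?thesis using key[of y c] y c by (simp add: divide_pos_neg)
    next
      case 2 then show ?thesis using R0 by simp
    next
      case 3 then show ?thesis using key[of y b] y b by (simp add: divide_neg_pos)
    qed
  qed
  have Rneg: "- r \<in> R" if rR: "r \<in> R" for r
  proof -
    obtain n where "r \<in> S n Y" using rR unfolding R_def by blast
    then show ?thesis
    proof (induction n arbitrary: r)
      case 0 then show ?case using R0 by simp
    next
      case (Suc n)
      then obtain x t where "x \<in> Y" "t \<in> S n Y" "r = x + t" by auto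
      then show ?case using Suc.IH[of t] negY[of x] Radd[of "- x" "- t"] by simp
    qed
  qed
  have cover: "\<exists>j\<le>N. q - of_nat j * a \<in> S (N - j) Y" for q
    using S_insert[of q N a Y] SN by auto
  have pig: "\<exists>k\<in>{1..N+1}. of_nat k * z \<in> R" for z
  proof -
    define f where "f i = (SOME j. j \<le> N \<and> of_nat i * z - of_nat j * a \<in> R)" for i :: nat
    have f: "f i \<le> N \<and> of_nat i * z - of_nat (f i) * a \<in> R" for i
    proof -
      obtain j where "j \<le> N" "of_nat i * z - of_nat j * a \<in> S (N - j) Y" using cover by blast
      then have "\<exists>j. j \<le> N \<and> of_nat i * z - of_nat j * a \<in> R" unfolding R_def by blast
      then show ?thesis unfolding f_def by (rule someI_ex)
    qed
    have "\<not> inj_on f {0..N+1}"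
    proof
      assume "inj_on f {0..N+1}"
      moreover have "f ` {0..N+1} \<subseteq> {0..N}" using f by auto
      ultimately have "card {0..N+1} \<le> card {0..N}" using card_inj_on_le by blast
      then show False by simp
    qed
    then obtain i1 i2 where i: "i1 \<in> {0..N+1}" "i2 \<in> {0..N+1}" "i1 \<noteq> i2" "f i1 = f i2"
      unfolding inj_on_def by blast
    have gen: "\<exists>k\<in>{1..N+1}. of_nat k * z \<in> R"
      if "i1 \<in> {0..N+1}" "i2 \<in> {0..N+1}" "i2 < i1" "f i1 = f i2" for i1 i2
    proof -
      have "(of_nat i1 * z - of_nat (f i1) * a) + - (of_nat i2 * z - of_nat (f i2) * a) \<in> R"
        using Radd[OF conjunct2[OF f[of i1]] Rneg[OF conjunct2[OF f[of i2]]]] .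
      moreover have "(of_nat i1 * z - of_nat (f i1) * a) + - (of_nat i2 * z - of_nat (f i2) * a)
          = of_nat (i1 - i2) * z" using that by (simp add: of_nat_diff algebra_simps)
      ultimately show ?thesis using that by (intro bexI[of _ "i1 - i2"]) auto
    qed
    show ?thesis
    proof (cases "i2 < i1")
      case True then show ?thesis using gen i by blast
    next
      case False then have "i1 < i2" using i by simp
      then show ?thesis using gen[of i2 i1] i by auto
    qed
  qed
  have RU: "w \<in> R" for w
  proof -
    define F :: nat where "F = fact (N + 1)"
    have F0: "F > 0" unfolding F_def by simp
    obtain k where k: "k \<in> {1..N+1}" "of_nat k * (w / of_nat F) \<in> R" using pig by blast
    have "k dvd F" unfolding F_def using k(1) dvd_fact[of k "N+1"] by simp
    then obtain d where d: "F = k * d" by blast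
    have "of_nat d * (of_nat k * (w / of_nat F)) \<in> R" using Rmult k(2) by blast
    moreover have "of_nat d * (of_nat k * (w / of_nat F)) = w" using F0 d
      by (simp add: field_simps)
    ultimately show ?thesis by simp
  qed
  obtain m where m: "a \<in> S m Y" using RU[of a] unfolding R_def by blast
  have bounded: "\<exists>l \<le> N + N * m. q \<in> S l Y" for q
  proof -
    obtain j where j: "j \<le> N" "q - of_nat j * a \<in> S (N - j) Y" using cover by blast
    have "of_nat j * a \<in> S (j * m) Y" using S_copies[OF m] .
    then have "(q - of_nat j * a) + of_nat j * a \<in> S (N - j + j * m) Y" using S_add[OF j(2)] by blast
    moreover have "N - j + j * m \<le> N + N * m" using j(1) by (intro add_le_mono) auto
    ultimately show ?thesis by auto
  qed
  obtain p where p: "- b \<in> S p Y" using Rneg[OF RY[OF b(1)]] unfolding R_def by blast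
  obtain t where t: "b / of_nat (Suc p) \<in> S t Y" using RU unfolding R_def by blast
  have "of_nat (Suc p) * (b / of_nat (Suc p)) \<in> S (Suc p * t) Y" using S_copies[OF t] .
  then have "b \<in> S (Suc p * t) Y" by simp
  then have "b + - b \<in> S (Suc p * t + p) Y" using S_add[OF _ p] by blast
  then have z1: "0 \<in> S (Suc p * t + p) Y" by simp
  have "b + - b \<in> S (1 + p) Y" using S_add[OF S_one[OF b(1)] p] .
  then have "0 \<in> S (Suc p) Y" by simp
  then have "of_nat (Suc t) * 0 \<in> S (Suc t * Suc p) Y" using S_copies by blast
  then have z2: "0 \<in> S (Suc (Suc p * t + p)) Y" by (simp add: algebra_simps)
  define B where "B = Suc p * t + p"
  define M where "M = N + N * m + B * B"
  have "S M Y = UNIV"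
  proof (intro set_eqI iffI)
    fix q :: rat
    obtain l where l: "l \<le> N + N * m" "q \<in> S l Y" using bounded by blast
    have "0 \<in> S (M - l) Y" using S_pad[of B Y "M - l"] z1 z2 l(1) unfolding B_def M_def by auto
    then have "q + 0 \<in> S (l + (M - l)) Y" using S_add[OF l(2)] by blast
    moreover have "l + (M - l) = M" using l(1) unfolding M_def by simp
    ultimately show "q \<in> S M Y" by simp
  qed simp
  moreover have "M \<ge> 1" using N unfolding M_def by simp
  ultimately show ?thesis by blast
qed

lemma is_base_S: "is_base X \<longleftrightarrow> (\<exists>N\<ge>1. S N X = UNIV)"
  unfolding is_base_def sumset_S ..

lemma base_mono: "is_base Z \<Longrightarrow> Z \<subseteq> W \<Longrightarrow> is_base W"
  unfolding is_base_S using S_mono by blast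

lemma base_remove_finite: "finite F \<Longrightarrow> is_base (Y \<union> F) \<Longrightarrow> is_base Y"
proof (induction F rule: finite_induct)
  case empty then show ?case by simp
next
  case (insert x F)
  have "Y \<union> insert x F = insert x (Y \<union> F)" by auto
  then obtain N where "N \<ge> 1" "S N (insert x (Y \<union> F)) = UNIV"
    using insert.prems unfolding is_base_S by auto
  then have "is_base (Y \<union> F)" using base_remove unfolding is_base_S by blast
  then show ?case using insert.IH by blast
qed

lemma half: "finite (X - Y) \<Longrightarrow> is_base X \<Longrightarrow> is_base Y"
proof -
  assume f: "finite (X - Y)" and b: "is_base X"
  have "X = (X \<inter> Y) \<union> (X - Y)" by auto
  then have "is_base ((X \<inter> Y) \<union> (X - Y))" using b by simp
  then have "is_base (X \<inter> Y)" using base_remove_finite[OF f] by blast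
  then show "is_base Y" using base_mono by blast
qed

theorem proposition2p6:
  fixes X Y :: "rat set"
  assumes "finite (X - Y)" and "finite (Y - X)"
  shows "is_base X \<longleftrightarrow> is_base Y"
  using half assms by blast

end
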